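(* Let $\mathfrak{s}_{3,-1}\oplus\mathbb{C}$ be the complex Lie algebra with basis $Z_1,Z_2,Z_3,Z_4$ and nonzero brackets $[Z_1,Z_2]=Z_2$, $[Z_1,Z_3]=-Z_3$. A Hermitian inner product $g$ on $\mathfrak{s}_{3,-1}\oplus\mathbb{C}$ induces an expanding algebraic soliton to HCF on the corresponding simply connected complex Lie group if and only if $g(Z_2,\bar Z_3)=g(Z_2,\bar Z_4)=g(Z_3,\bar Z_4)=0$.
   Context: A Hermitian inner product on a complex Lie algebra induces a left-invariant Hermitian metric on the simply connected complex Lie group. The HCF tensor $K(g)$ of such a metric is $K(g)(Z,\bar W)=\mathrm{Ric}^{1,1}(Z,\bar W)+\tfrac12\operatorname{tr}\operatorname{ad}_Z\cdot\overline{\operatorname{tr}\operatorname{ad}_W}$, with $\mathrm{Ric}^{1,1}$ the $(1,1)$-part of the Ricci tensor of the underlying Riemannian metric; $K_g$ is defined by $g(K_gX,\bar Y)=K(g)(X,\bar Y)$. The metric is an expanding algebraic soliton to HCF if $K_g=c\,I+\tfrac12(D+D^t)$ with $c<0$, $D$ a derivation and its $g$-adjoint $D^t$ also a derivation. *)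

theory Defs
  imports "HOL-Analysis.Analysis"
begin

text \<open>The complex Lie algebra s_{3,-1} + C is modelled as complex^4 with the standard basis
  Z1 = axis 1 1, Z2 = axis 2 1, Z3 = axis 3 1, Z4 = axis 4 1 (index type 4; note 4 = 0 there).\<close>

type_synonym alg = "complex ^ 4"

definition Zb :: "4 \<Rightarrow> alg" where "Zb k = axis k 1"

definition lie_br :: "alg \<Rightarrow> alg \<Rightarrow> alg" where
  "lie_br X Y = (\<chi> k. if k = 2 then X$1 * Y$2 - X$2 * Y$1
                      else if k = 3 then - (X$1 * Y$3 - X$3 * Y$1)
                      else 0)"

text \<open>Hermitian inner product: g X Y stands for g(X, conj Y); complex-linear in X,
  conjugate symmetric, positive definite.\<close>
definition herm_ip :: "(alg \<Rightarrow> alg \<Rightarrow> complex) \<Rightarrow> bool" where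
  "herm_ip g \<longleftrightarrow>
     (\<forall>x y z. g (x + y) z = g x z + g y z) \<and>
     (\<forall>a x y. g (a *s x) y = a * g x y) \<and>
     (\<forall>x y. g x y = cnj (g y x)) \<and>
     (\<forall>x. x \<noteq> 0 \<longrightarrow> Re (g x x) > 0)"

definition gR :: "(alg \<Rightarrow> alg \<Rightarrow> complex) \<Rightarrow> alg \<Rightarrow> alg \<Rightarrow> real" where
  "gR g X Y = Re (g X Y)"

definition Jc :: "alg \<Rightarrow> alg" where "Jc X = \<i> *s X"

text \<open>Levi-Civita connection of the left-invariant metric (Koszul formula on left-invariant fields).\<close>
definition lc :: "(alg \<Rightarrow> alg \<Rightarrow> complex) \<Rightarrow> alg \<Rightarrow> alg \<Rightarrow> alg" where
  "lc g X Y = (THE V. \<forall>W. gR g V W =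
      (gR g (lie_br X Y) W - gR g (lie_br Y W) X + gR g (lie_br W X) Y) / 2)"

definition curv :: "(alg \<Rightarrow> alg \<Rightarrow> complex) \<Rightarrow> alg \<Rightarrow> alg \<Rightarrow> alg \<Rightarrow> alg" where
  "curv g X Y Z = lc g X (lc g Y Z) - lc g Y (lc g X Z) - lc g (lie_br X Y) Z"

text \<open>Trace of a real-linear endomorphism of the underlying real vector space (R^8),
  computed in the standard orthonormal real basis.\<close>
definition real_trace :: "(alg \<Rightarrow> alg) \<Rightarrow> real" where
  "real_trace f = (\<Sum>b\<in>Basis. f b \<bullet> b)"

definition Ric :: "(alg \<Rightarrow> alg \<Rightarrow> complex) \<Rightarrow> alg \<Rightarrow> alg \<Rightarrow> real" where
  "Ric g Y Z = real_trace (\<lambda>X. curv g X Y Z)"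

text \<open>(1,1)-part (J-invariant part) of Ric, and the associated sesquilinear form
  Ric11(Z, conj W), with the same convention that turns gR into g:
  g(X, conj Y) = gR X Y + i gR X (J Y).\<close>
definition Ric11 :: "(alg \<Rightarrow> alg \<Rightarrow> complex) \<Rightarrow> alg \<Rightarrow> alg \<Rightarrow> real" where
  "Ric11 g X Y = (Ric g X Y + Ric g (Jc X) (Jc Y)) / 2"

definition Ric11c :: "(alg \<Rightarrow> alg \<Rightarrow> complex) \<Rightarrow> alg \<Rightarrow> alg \<Rightarrow> complex" where
  "Ric11c g X Y = complex_of_real (Ric11 g X Y) + \<i> * complex_of_real (Ric11 g X (Jc Y))"

definition tr_ad :: "alg \<Rightarrow> complex" where
  "tr_ad Z = (\<Sum>k\<in>UNIV. lie_br Z (axis k 1) $ k)"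

definition Khcf :: "(alg \<Rightarrow> alg \<Rightarrow> complex) \<Rightarrow> alg \<Rightarrow> alg \<Rightarrow> complex" where
  "Khcf g Z W = Ric11c g Z W + tr_ad Z * cnj (tr_ad W) / 2"

definition is_derivation :: "complex ^ 4 ^ 4 \<Rightarrow> bool" where
  "is_derivation D \<longleftrightarrow>
     (\<forall>X Y. D *v lie_br X Y = lie_br (D *v X) Y + lie_br X (D *v Y))"

text \<open>Expanding algebraic soliton: K_g = c I + (D + D^t)/2, c < 0, D and its g-adjoint D^t
  derivations; K_g is determined by g(K_g X, conj Y) = K(g)(X, conj Y).\<close>
definition hcf_expanding_soliton :: "(alg \<Rightarrow> alg \<Rightarrow> complex) \<Rightarrow> bool" where
  "hcf_expanding_soliton g \<longleftrightarrow>
     (\<exists>c::real. \<exists>D Dt. c < 0 \<and> is_derivation D \<and> is_derivation Dt \<and>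
        (\<forall>X Y. g (D *v X) Y = g X (Dt *v Y)) \<and>
        (\<forall>X Y. Khcf g X Y =
              g (complex_of_real c *s X + (1/2 :: complex) *s (D *v X + Dt *v X)) Y))"

end

theory Submission
  imports Defs
begin


datatype cv = CV complex complex complex complex

fun vadd :: "cv \<Rightarrow> cv \<Rightarrow> cv" where
 "vadd (CV a b c d) (CV a' b' c' d') = CV (a+a') (b+b') (c+c') (d+d')"
fun vsub :: "cv \<Rightarrow> cv \<Rightarrow> cv" where
 "vsub (CV a b c d) (CV a' b' c' d') = CV (a-a') (b-b') (c-c') (d-d')"
fun vsc :: "complex \<Rightarrow> cv \<Rightarrow> cv" where
 "vsc k (CV a b c d) = CV (k*a) (k*b) (k*c) (k*d)"
fun hs :: "cv \<Rightarrow> cv \<Rightarrow> complex" where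
 "hs (CV a b c d) (CV a' b' c' d') = a * cnj a' + b * cnj b' + c * cnj c' + d * cnj d'"
fun c1 :: "cv \<Rightarrow> complex" where "c1 (CV a b c d) = a"
fun c2 :: "cv \<Rightarrow> complex" where "c2 (CV a b c d) = b"
fun c3 :: "cv \<Rightarrow> complex" where "c3 (CV a b c d) = c"
fun c4 :: "cv \<Rightarrow> complex" where "c4 (CV a b c d) = d"

context fixes lam :: real and al be ga :: complex begin
fun Mv :: "cv \<Rightarrow> cv" where
 "Mv (CV x1 x2 x3 x4) = CV 0 (of_real lam * x2 + al * x3 + be * x4) (- of_real lam * x3 + ga * x4) 0"
fun Msv :: "cv \<Rightarrow> cv" where
 "Msv (CV x1 x2 x3 x4) = CV 0 (of_real lam * x2) (cnj al * x2 - of_real lam * x3) (cnj be * x2 + cnj ga * x3)"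
definition brc :: "cv \<Rightarrow> cv \<Rightarrow> cv" where
 "brc x y = vsub (vsc (c1 x) (Mv y)) (vsc (c1 y) (Mv x))"
definition Lc :: "cv \<Rightarrow> cv \<Rightarrow> cv" where
 "Lc x y = vsc (1/2) (vadd (vsub (vsub (vsub (vsc (c1 x) (Mv y)) (vsc (cnj (c1 x)) (Msv y)))
      (vsc (c1 y) (Mv x))) (vsc (cnj (c1 y)) (Msv x))) (CV (hs x (Mv y) + hs y (Mv x)) 0 0 0))"
definition Rcc :: "cv \<Rightarrow> cv \<Rightarrow> cv \<Rightarrow> cv" where
 "Rcc x y z = vsub (vsub (Lc x (Lc y z)) (Lc y (Lc x z))) (Lc (brc x y) z)"
definition ricc :: "cv \<Rightarrow> cv \<Rightarrow> real" where
 "ricc y z = Re (c1 (Rcc (CV 1 0 0 0) y z)) + Re (c2 (Rcc (CV 0 1 0 0) y z))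
   + Re (c3 (Rcc (CV 0 0 1 0) y z)) + Re (c4 (Rcc (CV 0 0 0 1) y z))
   + Im (c1 (Rcc (CV \<i> 0 0 0) y z)) + Im (c2 (Rcc (CV 0 \<i> 0 0) y z))
   + Im (c3 (Rcc (CV 0 0 \<i> 0) y z)) + Im (c4 (Rcc (CV 0 0 0 \<i>) y z))"
definition R11c :: "cv \<Rightarrow> cv \<Rightarrow> real" where
 "R11c y z = (ricc y z + ricc (vsc \<i> y) (vsc \<i> z)) / 2"
definition Kc :: "cv \<Rightarrow> cv \<Rightarrow> complex" where
 "Kc y z = of_real (R11c y z) + \<i> * of_real (R11c y (vsc \<i> z))"
end

lemma koszul_c:
  "Re (hs (Lc lam al be ga x y) w) =
    (Re (hs (brc lam al be ga x y) w) - Re (hs (brc lam al be ga y w) x) + Re (hs (brc lam al be ga w x) y)) / 2"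
  apply (cases x; cases y; cases w)
  apply (simp add: Lc_def brc_def)
  apply (simp add: field_simps)
  done

lemma brc_add1: "brc lam al be ga (vadd x x') y = vadd (brc lam al be ga x y) (brc lam al be ga x' y)"
  by (cases x; cases x'; cases y) (simp add: brc_def algebra_simps)
lemma brc_sc1: "brc lam al be ga (vsc (of_real r) x) y = vsc (of_real r) (brc lam al be ga x y)"
  by (cases x; cases y) (simp add: brc_def algebra_simps)
lemma Lc_add1: "Lc lam al be ga (vadd x x') y = vadd (Lc lam al be ga x y) (Lc lam al be ga x' y)"
  by (cases x; cases x'; cases y) (simp add: Lc_def algebra_simps)
lemma Lc_sc1: "Lc lam al be ga (vsc (of_real r) x) y = vsc (of_real r) (Lc lam al be ga x y)"
  by (cases x; cases y) (simp add: Lc_def algebra_simps)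
lemma Lc_add2: "Lc lam al be ga y (vadd x x') = vadd (Lc lam al be ga y x) (Lc lam al be ga y x')"
  by (cases x; cases x'; cases y) (simp add: Lc_def algebra_simps)
lemma Lc_sc2: "Lc lam al be ga y (vsc (of_real r) x) = vsc (of_real r) (Lc lam al be ga y x)"
  by (cases x; cases y) (simp add: Lc_def algebra_simps)
lemma vsub_add: "vsub (vadd a b) (vadd c d) = vadd (vsub a c) (vsub b d)"
  by (cases a; cases b; cases c; cases d) simp
lemma vsub_sc: "vsub (vsc k a) (vsc k b) = vsc k (vsub a b)"
  by (cases a; cases b) (simp add: algebra_simps)

lemma Rcc_add1: "Rcc lam al be ga (vadd x x') y z = vadd (Rcc lam al be ga x y z) (Rcc lam al be ga x' y z)"
  by (simp add: Rcc_def Lc_add1 Lc_add2 brc_add1 vsub_add)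
lemma Rcc_sc1: "Rcc lam al be ga (vsc (of_real r) x) y z = vsc (of_real r) (Rcc lam al be ga x y z)"
  by (simp add: Rcc_def Lc_sc1 Lc_sc2 brc_sc1 vsub_sc)

lemma Kdiag: "Kc lam 0 0 0 y z = - 2 * of_real (lam^2) * c1 y * cnj (c1 z)"
  apply (cases y; cases z)
  apply (simp add: Kc_def R11c_def ricc_def Rcc_def Lc_def brc_def field_simps complex_eq_iff power2_eq_square)
  done

lemma K42: "Kc lam al be ga (CV 0 0 0 1) (CV 0 1 0 0) = - of_real lam * be"
  by (simp add: Kc_def R11c_def ricc_def Rcc_def Lc_def brc_def field_simps complex_eq_iff)
lemma K43: "Kc lam al be ga (CV 0 0 0 1) (CV 0 0 1 0) = of_real lam * ga - cnj al * be"
  by (simp add: Kc_def R11c_def ricc_def Rcc_def Lc_def brc_def field_simps complex_eq_iff)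
lemma K32: "Kc lam al be ga (CV 0 0 1 0) (CV 0 1 0 0) = - 2 * of_real lam * al + be * cnj ga"
  by (simp add: Kc_def R11c_def ricc_def Rcc_def Lc_def brc_def field_simps complex_eq_iff)



lemma scaleR_as_s: "r *\<^sub>R (x::alg) = complex_of_real r *s x"
  unfolding vec_eq_iff
  apply (rule allI)
  apply (simp only: vector_scaleR_component vector_smult_component)
  apply (simp add: scaleR_conv_of_real)
  done

lemma trace_rank1:
  fixes phi :: "alg \<Rightarrow> real" assumes lp: "linear phi"
  shows "real_trace (\<lambda>X. phi X *\<^sub>R v) = phi v"
proof -
  have 1: "real_trace (\<lambda>X. phi X *\<^sub>R v) = (\<Sum>b\<in>Basis. phi b * (v \<bullet> b))"
    unfolding real_trace_def by (simp only: inner_scaleR_left)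
  have "phi v = phi (\<Sum>b\<in>Basis. (v \<bullet> b) *\<^sub>R b)"
    by (simp only: euclidean_representation)
  also have "\<dots> = (\<Sum>b\<in>Basis. (v \<bullet> b) * phi b)"
    by (simp only: linear_sum[OF lp] o_def linear_cmul[OF lp] real_scaleR_def)
  also have "\<dots> = (\<Sum>b\<in>Basis. phi b * (v \<bullet> b))"
    by (simp only: mult.commute)
  finally show ?thesis using 1 by simp
qed

lemma trace_add: "real_trace (\<lambda>X. f X + h X) = real_trace f + real_trace h"
  unfolding real_trace_def inner_add_left by (rule sum.distrib)

lemma tr_ad_zero: "tr_ad X = 0"
  by (simp add: tr_ad_def sum_4 lie_br_def axis_def)

lemma cv_decomp: "x = vadd (vsc (of_real (Re (c1 x))) (CV 1 0 0 0)) (vadd (vsc (of_real (Im (c1 x))) (CV \<i> 0 0 0))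
   (vadd (vsc (of_real (Re (c2 x))) (CV 0 1 0 0)) (vadd (vsc (of_real (Im (c2 x))) (CV 0 \<i> 0 0))
   (vadd (vsc (of_real (Re (c3 x))) (CV 0 0 1 0)) (vadd (vsc (of_real (Im (c3 x))) (CV 0 0 \<i> 0))
   (vadd (vsc (of_real (Re (c4 x))) (CV 0 0 0 1)) (vsc (of_real (Im (c4 x))) (CV 0 0 0 \<i>))))))))"
  by (cases x) (simp add: complex_eq_iff)

definition tr8 :: "(cv \<Rightarrow> cv) \<Rightarrow> real" where
 "tr8 h = Re (c1 (h (CV 1 0 0 0))) + Re (c2 (h (CV 0 1 0 0)))
   + Re (c3 (h (CV 0 0 1 0))) + Re (c4 (h (CV 0 0 0 1)))
   + Im (c1 (h (CV \<i> 0 0 0))) + Im (c2 (h (CV 0 \<i> 0 0)))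
   + Im (c3 (h (CV 0 0 \<i> 0))) + Im (c4 (h (CV 0 0 0 \<i>)))"

locale hermf =
  fixes g :: "alg \<Rightarrow> alg \<Rightarrow> complex"
  assumes hg: "herm_ip g"
begin
lemma hparts: "(\<forall>x y z. g (x + y) z = g x z + g y z) \<and> (\<forall>a x y. g (a *s x) y = a * g x y) \<and>
     (\<forall>x y. g x y = cnj (g y x)) \<and> (\<forall>x. x \<noteq> 0 \<longrightarrow> Re (g x x) > 0)"
  using hg unfolding herm_ip_def .
lemmas g_add1 = hparts[THEN conjunct1, rule_format]
lemmas g_scale1 = hparts[THEN conjunct2, THEN conjunct1, rule_format]
lemmas g_sym = hparts[THEN conjunct2, THEN conjunct2, THEN conjunct1, rule_format]
lemmas g_pos = hparts[THEN conjunct2, THEN conjunct2, THEN conjunct2, rule_format]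
lemma g_add2: "g x (y + z) = g x y + g x z"
proof -
  have "g x (y + z) = cnj (g (y + z) x)" by (rule g_sym)
  also have "\<dots> = cnj (g y x) + cnj (g z x)" by (simp add: g_add1)
  also have "\<dots> = g x y + g x z" by (simp add: g_sym[of x y] g_sym[of x z])
  finally show ?thesis .
qed
lemma g_scale2: "g x (a *s y) = cnj a * g x y"
proof -
  have "g x (a *s y) = cnj (g (a *s y) x)" by (rule g_sym)
  also have "\<dots> = cnj a * cnj (g y x)" by (simp add: g_scale1)
  also have "\<dots> = cnj a * g x y" by (simp add: g_sym[of x y])
  finally show ?thesis .
qed
lemma g_zero1[simp]: "g 0 y = 0"
  using g_scale1[of 0 0 y] by simp
lemma g_zero2[simp]: "g y 0 = 0"
  using g_scale2[of y 0 0] by simp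
lemma g_neg1: "g (- x) y = - g x y"
  by (simp only: vector_sneg_minus1[of x] g_scale1) simp
lemma g_sub1: "g (x - y) z = g x z - g y z"
  using g_add1[of x "- y" z] g_neg1[of y z] by simp
lemma g_neg2: "g x (- y) = - g x y"
  by (simp only: vector_sneg_minus1[of y] g_scale2) simp
lemma g_sub2: "g x (y - z) = g x y - g x z"
  using g_add2[of x y "- z"] g_neg2[of x z] by simp
lemma g_real: "g x x = complex_of_real (Re (g x x))"
proof -
  have "Im (g x x) = Im (cnj (g x x))" using g_sym[of x x] by simp
  then have "Im (g x x) = 0" by simp
  then show ?thesis by (simp add: complex_eq_iff)
qed
lemma g_eq0: assumes "g x x = 0" shows "x = 0"
proof (rule ccontr)
  assume "x \<noteq> 0"
  then have "Re (g x x) > 0" by (rule g_pos)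
  with assms show False by simp
qed
lemma gR_unique:
  assumes "\<And>W. Re (g V W) = Re (g V' W)" shows "V = V'"
proof -
  have "Re (g (V - V') (V - V')) = 0" using assms[of "V - V'"] by (simp add: g_sub1)
  then have "V - V' = 0" using g_pos[of "V - V'"] by fastforce
  then show ?thesis by simp
qed
lemmas gsimps = g_add1 g_add2 g_scale1 g_scale2 g_sub1 g_sub2 g_neg1 g_neg2
end

section \<open>Orthonormal frames\<close>

definition PhiF :: "alg \<Rightarrow> alg \<Rightarrow> alg \<Rightarrow> alg \<Rightarrow> cv \<Rightarrow> alg" where
  "PhiF e1 e2 e3 e4 x = (case x of CV a b c d \<Rightarrow> a *s e1 + b *s e2 + c *s e3 + d *s e4)"

lemma PhiF_simp[simp]: "PhiF e1 e2 e3 e4 (CV a b c d) = a *s e1 + b *s e2 + c *s e3 + d *s e4"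
  by (simp add: PhiF_def)

locale frame = hermf +
  fixes e1 e2 e3 e4 :: alg and lam :: real and al be ga :: complex
  assumes on: "g e1 e1 = 1" "g e2 e2 = 1" "g e3 e3 = 1" "g e4 e4 = 1"
          "g e1 e2 = 0" "g e1 e3 = 0" "g e1 e4 = 0" "g e2 e3 = 0" "g e2 e4 = 0" "g e3 e4 = 0"
  and span: "\<And>X. X = g X e1 *s e1 + g X e2 *s e2 + g X e3 *s e3 + g X e4 *s e4"
  and brk: "\<And>x y. lie_br (PhiF e1 e2 e3 e4 x) (PhiF e1 e2 e3 e4 y) = PhiF e1 e2 e3 e4 (brc lam al be ga x y)"
begin
abbreviation "Phi \<equiv> PhiF e1 e2 e3 e4"
definition co :: "alg \<Rightarrow> cv" where "co X = CV (g X e1) (g X e2) (g X e3) (g X e4)"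

lemma on2: "g e2 e1 = 0" "g e3 e1 = 0" "g e4 e1 = 0" "g e3 e2 = 0" "g e4 e2 = 0" "g e4 e3 = 0"
  by (simp_all add: g_sym[of e2 e1] g_sym[of e3 e1] g_sym[of e4 e1] g_sym[of e3 e2] g_sym[of e4 e2] g_sym[of e4 e3] on)

lemma Phi_co: "Phi (co X) = X"
  unfolding co_def PhiF_simp by (rule span[symmetric])

lemma co_Phi: "co (Phi x) = x"
  by (cases x) (simp add: co_def gsimps on on2)

lemma g_Phi_e: "g (Phi x) e1 = c1 x" "g (Phi x) e2 = c2 x" "g (Phi x) e3 = c3 x" "g (Phi x) e4 = c4 x"
  by (cases x; simp add: gsimps on on2)+

lemma g_Phi: "g (Phi x) (Phi y) = hs x y"
  by (cases x; cases y) (simp add: gsimps on on2 algebra_simps)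

lemma Phi_sub: "Phi (vsub a b) = Phi a - Phi b"
  by (cases a; cases b) (simp add: vector_sub_rdistrib algebra_simps)
lemma Phi_add: "Phi (vadd a b) = Phi a + Phi b"
  by (cases a; cases b) (simp add: vector_sadd_rdistrib algebra_simps)
lemma Phi_sc: "Phi (vsc k a) = k *s Phi a"
  by (cases a) (simp add: vector_add_ldistrib vector_smult_assoc)

lemma lc_Phi: "lc g (Phi x) (Phi y) = Phi (Lc lam al be ga x y)"
  unfolding lc_def
proof (rule the_equality)
  show "\<forall>W. gR g (Phi (Lc lam al be ga x y)) W =
        (gR g (lie_br (Phi x) (Phi y)) W - gR g (lie_br (Phi y) W) (Phi x) + gR g (lie_br W (Phi x)) (Phi y)) / 2"
  proof
    fix W
    obtain w where w: "W = Phi w" using Phi_co by metis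
    show "gR g (Phi (Lc lam al be ga x y)) W =
        (gR g (lie_br (Phi x) (Phi y)) W - gR g (lie_br (Phi y) W) (Phi x) + gR g (lie_br W (Phi x)) (Phi y)) / 2"
      unfolding w gR_def brk g_Phi by (rule koszul_c)
  qed
next
  fix V assume V: "\<forall>W. gR g V W =
        (gR g (lie_br (Phi x) (Phi y)) W - gR g (lie_br (Phi y) W) (Phi x) + gR g (lie_br W (Phi x)) (Phi y)) / 2"
  show "V = Phi (Lc lam al be ga x y)"
  proof (rule gR_unique)
    fix W
    obtain w where w: "W = Phi w" using Phi_co by metis
    show "Re (g V W) = Re (g (Phi (Lc lam al be ga x y)) W)"
      using V[rule_format, of W] unfolding w gR_def brk g_Phi koszul_c by simp
  qed
qed

lemma lc_co: "lc g X Y = Phi (Lc lam al be ga (co X) (co Y))"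
  using lc_Phi[of "co X" "co Y"] by (simp add: Phi_co)
lemma lie_co: "lie_br X Y = Phi (brc lam al be ga (co X) (co Y))"
  using brk[of "co X" "co Y"] by (simp add: Phi_co)
lemma curv_co: "curv g X Y Z = Phi (Rcc lam al be ga (co X) (co Y) (co Z))"
  unfolding curv_def Rcc_def Phi_sub lc_co lie_co co_Phi ..

lemma lin_Re: "linear (\<lambda>X. Re (g X e))"
  by (rule linearI) (simp_all add: g_add1 scaleR_as_s g_scale1)
lemma lin_Im: "linear (\<lambda>X. Im (g X e))"
  by (rule linearI) (simp_all add: g_add1 scaleR_as_s g_scale1)

lemma trace_frame:
  assumes add: "\<And>x y. h (vadd x y) = vadd (h x) (h y)"
    and sc: "\<And>r x. h (vsc (of_real r) x) = vsc (of_real r) (h x)"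
  shows "real_trace (\<lambda>X. Phi (h (co X))) = tr8 h"
proof -
  have eq: "Phi (h (co X)) =
      Re (g X e1) *\<^sub>R Phi (h (CV 1 0 0 0)) + (Im (g X e1) *\<^sub>R Phi (h (CV \<i> 0 0 0)) +
     (Re (g X e2) *\<^sub>R Phi (h (CV 0 1 0 0)) + (Im (g X e2) *\<^sub>R Phi (h (CV 0 \<i> 0 0)) +
     (Re (g X e3) *\<^sub>R Phi (h (CV 0 0 1 0)) + (Im (g X e3) *\<^sub>R Phi (h (CV 0 0 \<i> 0)) +
     (Re (g X e4) *\<^sub>R Phi (h (CV 0 0 0 1)) + Im (g X e4) *\<^sub>R Phi (h (CV 0 0 0 \<i>))))))))" for X
    apply (subst cv_decomp[of "co X"])
    apply (simp only: add sc Phi_add Phi_sc scaleR_as_s)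
    apply (simp add: co_def)
    done
  show ?thesis
    unfolding eq trace_add
    by (simp add: trace_rank1 lin_Re lin_Im g_Phi_e tr8_def)
qed

lemma Ric_co: "Ric g Y Z = ricc lam al be ga (co Y) (co Z)"
proof -
  have "Ric g Y Z = real_trace (\<lambda>X. Phi (Rcc lam al be ga (co X) (co Y) (co Z)))"
    by (simp add: Ric_def curv_co)
  also have "\<dots> = tr8 (\<lambda>x. Rcc lam al be ga x (co Y) (co Z))"
    by (rule trace_frame) (simp_all add: Rcc_add1 Rcc_sc1)
  also have "\<dots> = ricc lam al be ga (co Y) (co Z)"
    by (simp add: tr8_def ricc_def)
  finally show ?thesis .
qed

lemma co_J: "co (Jc X) = vsc \<i> (co X)"
  by (simp add: co_def Jc_def g_scale1)

lemma Khcf_co: "Khcf g X Y = Kc lam al be ga (co X) (co Y)"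
  by (simp add: Khcf_def tr_ad_zero Ric11c_def Ric11_def Ric_co co_J Kc_def R11c_def)

end



lemma brk_generic:
 fixes na nb nc nd :: real and ta ua ub va vb vc :: complex
 assumes n: "na > 0" "nb > 0" "nc > 0" "nd > 0"
 and e: "e2 = complex_of_real (1/nb) *s Zb 2" "e3 = complex_of_real (1/nc) *s (Zb 3 - ta *s e2)"
 "e4 = complex_of_real (1/nd) *s (Zb 4 - ua *s e2 - ub *s e3)"
 "e1 = complex_of_real (1/na) *s (Zb 1 - va *s e2 - vb *s e3 - vc *s e4)"
 shows "lie_br (PhiF e1 e2 e3 e4 x) (PhiF e1 e2 e3 e4 y) = PhiF e1 e2 e3 e4 (brc (1/na)
    (- 2 * complex_of_real (1/na) * ta / complex_of_real nc)
    (complex_of_real (1/na) * (- ua + 2 * ub * ta / complex_of_real nc) / complex_of_real nd)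
    (complex_of_real (1/na) * ub / complex_of_real nd) x y)"
  using n
  apply (cases x; cases y)
  apply (simp add: vec_eq_iff forall_4 lie_br_def brc_def Zb_def axis_def e)
  apply (simp add: field_simps)
  done



definition nrm :: "(alg \<Rightarrow> alg \<Rightarrow> complex) \<Rightarrow> alg \<Rightarrow> real" where "nrm g w = sqrt (Re (g w w))"
definition unt :: "(alg \<Rightarrow> alg \<Rightarrow> complex) \<Rightarrow> alg \<Rightarrow> alg" where
  "unt g w = complex_of_real (1 / nrm g w) *s w"
definition "E2 g = unt g (Zb 2)"
definition "W3 g = Zb 3 - g (Zb 3) (E2 g) *s E2 g"
definition "E3 g = unt g (W3 g)"
definition "W4 g = Zb 4 - g (Zb 4) (E2 g) *s E2 g - g (Zb 4) (E3 g) *s E3 g"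
definition "E4 g = unt g (W4 g)"
definition "W1 g = Zb 1 - g (Zb 1) (E2 g) *s E2 g - g (Zb 1) (E3 g) *s E3 g - g (Zb 1) (E4 g) *s E4 g"
definition "E1 g = unt g (W1 g)"
definition "lamG g = 1 / nrm g (W1 g)"
definition "alG g = - 2 * complex_of_real (1 / nrm g (W1 g)) * g (Zb 3) (E2 g) / complex_of_real (nrm g (W3 g))"
definition "beG g = complex_of_real (1 / nrm g (W1 g)) * (- g (Zb 4) (E2 g) + 2 * g (Zb 4) (E3 g) * g (Zb 3) (E2 g)
     / complex_of_real (nrm g (W3 g))) / complex_of_real (nrm g (W4 g))"
definition "gaG g = complex_of_real (1 / nrm g (W1 g)) * g (Zb 4) (E3 g) / complex_of_real (nrm g (W4 g))"

lemma Xdec: "X = X$1 *s Zb 1 + X$2 *s Zb 2 + X$3 *s Zb 3 + X$4 *s Zb 4"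
  by (simp add: vec_eq_iff forall_4 Zb_def axis_def)

lemma Zb_ne: "Zb k \<noteq> 0"
  by (simp add: Zb_def)

context hermf begin

lemma nrm_pos: "w \<noteq> 0 \<Longrightarrow> nrm g w > 0" by (simp add: nrm_def g_pos)
lemma unt_g1: "g (unt g w) v = complex_of_real (1 / nrm g w) * g w v" by (simp add: unt_def g_scale1)
lemma unt_g2: "g v (unt g w) = complex_of_real (1 / nrm g w) * g v w" by (simp add: unt_def g_scale2)
lemma unt_unit: assumes "w \<noteq> 0" shows "g (unt g w) (unt g w) = 1"
proof -
  have p: "Re (g w w) > 0" using g_pos assms by blast
  have n: "nrm g w > 0" using nrm_pos assms by blast
  have gw: "g w w = complex_of_real ((nrm g w)^2)" using p g_real[of w] by (simp add: nrm_def)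
  have "g (unt g w) (unt g w) = complex_of_real (1 / nrm g w) * complex_of_real (1 / nrm g w) * g w w"
    by (simp add: unt_g1 unt_g2)
  also have "\<dots> = complex_of_real ((1 / nrm g w) * (1 / nrm g w) * (nrm g w)^2)"
    by (simp only: gw of_real_mult)
  also have "\<dots> = 1" using n by (simp add: power2_eq_square)
  finally show ?thesis .
qed
lemma unt_inv: assumes "w \<noteq> 0" shows "w = complex_of_real (nrm g w) *s unt g w"
  using nrm_pos[OF assms] by (simp add: unt_def vector_smult_assoc)

lemma comps: "E2 g $ 1 = 0" "E2 g $ 3 = 0" "E2 g $ 4 = 0" "E3 g $ 1 = 0" "E3 g $ 4 = 0" "E4 g $ 1 = 0"
  by (simp_all add: E2_def E3_def E4_def W3_def W4_def unt_def Zb_def axis_def)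
lemma W_ne: "W3 g \<noteq> 0" "W4 g \<noteq> 0" "W1 g \<noteq> 0"
proof -
  have "W3 g $ 3 = 1" by (simp add: W3_def comps Zb_def axis_def)
  then show "W3 g \<noteq> 0" by auto
  have "W4 g $ 4 = 1" by (simp add: W4_def comps Zb_def axis_def)
  then show "W4 g \<noteq> 0" by auto
  have "W1 g $ 1 = 1" by (simp add: W1_def comps Zb_def axis_def)
  then show "W1 g \<noteq> 0" by auto
qed

lemma o22: "g (E2 g) (E2 g) = 1" by (simp add: E2_def unt_unit Zb_ne)
lemma o33: "g (E3 g) (E3 g) = 1" by (simp add: E3_def unt_unit W_ne)
lemma o44: "g (E4 g) (E4 g) = 1" by (simp add: E4_def unt_unit W_ne)
lemma o11: "g (E1 g) (E1 g) = 1" by (simp add: E1_def unt_unit W_ne)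
lemma o32: "g (E3 g) (E2 g) = 0"
  by (simp add: E3_def unt_g1 W3_def gsimps o22)
lemma o23: "g (E2 g) (E3 g) = 0" using o32 g_sym by (metis complex_cnj_zero)
lemma o42: "g (E4 g) (E2 g) = 0"
  by (simp add: E4_def unt_g1 W4_def gsimps o22 o32)
lemma o43: "g (E4 g) (E3 g) = 0"
  by (simp add: E4_def unt_g1 W4_def gsimps o33 o23)
lemma o24: "g (E2 g) (E4 g) = 0" using o42 g_sym by (metis complex_cnj_zero)
lemma o34: "g (E3 g) (E4 g) = 0" using o43 g_sym by (metis complex_cnj_zero)
lemma o12: "g (E1 g) (E2 g) = 0"
  by (simp add: E1_def unt_g1 W1_def gsimps o22 o32 o42)
lemma o13: "g (E1 g) (E3 g) = 0"
  by (simp add: E1_def unt_g1 W1_def gsimps o33 o23 o43)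
lemma o14: "g (E1 g) (E4 g) = 0"
  by (simp add: E1_def unt_g1 W1_def gsimps o44 o24 o34)

definition "PP X = g X (E1 g) *s E1 g + g X (E2 g) *s E2 g + g X (E3 g) *s E3 g + g X (E4 g) *s E4 g"

lemma PP_add: "PP (X + Y) = PP X + PP Y"
  by (simp add: PP_def g_add1 vector_sadd_rdistrib algebra_simps)
lemma PP_sc: "PP (c *s X) = c *s PP X"
  by (simp add: PP_def g_scale1 vector_add_ldistrib vector_smult_assoc)
lemma o21: "g (E2 g) (E1 g) = 0" using o12 g_sym[of "E2 g" "E1 g"] by simp
lemma o31: "g (E3 g) (E1 g) = 0" using o13 g_sym[of "E3 g" "E1 g"] by simp
lemma o41: "g (E4 g) (E1 g) = 0" using o14 g_sym[of "E4 g" "E1 g"] by simp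
lemma PP_E: "PP (E1 g) = E1 g" "PP (E2 g) = E2 g" "PP (E3 g) = E3 g" "PP (E4 g) = E4 g"
  by (simp_all add: PP_def o11 o22 o33 o44 o12 o13 o14 o23 o24 o34 o32 o42 o43 o21 o31 o41)

lemma Z2e: "Zb 2 = complex_of_real (nrm g (Zb 2)) *s E2 g"
  unfolding E2_def by (rule unt_inv[OF Zb_ne])
lemma Z3e: "Zb 3 = complex_of_real (nrm g (W3 g)) *s E3 g + g (Zb 3) (E2 g) *s E2 g"
proof -
  have h: "W3 g = complex_of_real (nrm g (W3 g)) *s E3 g" unfolding E3_def by (rule unt_inv[OF W_ne(1)])
  have "Zb 3 = W3 g + g (Zb 3) (E2 g) *s E2 g" by (simp add: W3_def)
  then show ?thesis by (simp only: h[symmetric])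
qed
lemma Z4e: "Zb 4 = complex_of_real (nrm g (W4 g)) *s E4 g + g (Zb 4) (E2 g) *s E2 g + g (Zb 4) (E3 g) *s E3 g"
proof -
  have h: "W4 g = complex_of_real (nrm g (W4 g)) *s E4 g" unfolding E4_def by (rule unt_inv[OF W_ne(2)])
  have "Zb 4 = W4 g + g (Zb 4) (E2 g) *s E2 g + g (Zb 4) (E3 g) *s E3 g" by (simp add: W4_def)
  then show ?thesis by (simp only: h[symmetric])
qed
lemma Z1e: "Zb 1 = complex_of_real (nrm g (W1 g)) *s E1 g + g (Zb 1) (E2 g) *s E2 g + g (Zb 1) (E3 g) *s E3 g
   + g (Zb 1) (E4 g) *s E4 g"
proof -
  have h: "W1 g = complex_of_real (nrm g (W1 g)) *s E1 g" unfolding E1_def by (rule unt_inv[OF W_ne(3)])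
  have "Zb 1 = W1 g + g (Zb 1) (E2 g) *s E2 g + g (Zb 1) (E3 g) *s E3 g + g (Zb 1) (E4 g) *s E4 g"
    by (simp add: W1_def)
  then show ?thesis by (simp only: h[symmetric])
qed

lemma PP_Z: "PP (Zb 1) = Zb 1" "PP (Zb 2) = Zb 2" "PP (Zb 3) = Zb 3" "PP (Zb 4) = Zb 4"
proof -
  show "PP (Zb 1) = Zb 1"
    using arg_cong[OF Z1e, of PP] by (simp only: PP_add PP_sc PP_E) (rule Z1e[symmetric])
  show "PP (Zb 2) = Zb 2"
    using arg_cong[OF Z2e, of PP] by (simp only: PP_add PP_sc PP_E) (rule Z2e[symmetric])
  show "PP (Zb 3) = Zb 3"
    using arg_cong[OF Z3e, of PP] by (simp only: PP_add PP_sc PP_E) (rule Z3e[symmetric])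
  show "PP (Zb 4) = Zb 4"
    using arg_cong[OF Z4e, of PP] by (simp only: PP_add PP_sc PP_E) (rule Z4e[symmetric])
qed

lemma span_E: "X = PP X"
proof -
  have "PP X = PP (X$1 *s Zb 1 + X$2 *s Zb 2 + X$3 *s Zb 3 + X$4 *s Zb 4)"
    by (simp only: Xdec[of X, symmetric])
  also have "\<dots> = X$1 *s Zb 1 + X$2 *s Zb 2 + X$3 *s Zb 3 + X$4 *s Zb 4"
    by (simp add: PP_add PP_sc PP_Z)
  also have "\<dots> = X" by (simp only: Xdec[of X, symmetric])
  finally show ?thesis by simp
qed

lemma frame_inst: "frame g (E1 g) (E2 g) (E3 g) (E4 g) (lamG g) (alG g) (beG g) (gaG g)"
proof (unfold_locales)
  show "g (E1 g) (E1 g) = 1" "g (E2 g) (E2 g) = 1" "g (E3 g) (E3 g) = 1" "g (E4 g) (E4 g) = 1"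
          "g (E1 g) (E2 g) = 0" "g (E1 g) (E3 g) = 0" "g (E1 g) (E4 g) = 0" "g (E2 g) (E3 g) = 0"
          "g (E2 g) (E4 g) = 0" "g (E3 g) (E4 g) = 0"
    by (simp_all add: o11 o22 o33 o44 o12 o13 o14 o23 o24 o34)
  show "\<And>X. X = g X (E1 g) *s E1 g + g X (E2 g) *s E2 g + g X (E3 g) *s E3 g + g X (E4 g) *s E4 g"
    using span_E by (simp add: PP_def)
  show "\<And>x y. lie_br (PhiF (E1 g) (E2 g) (E3 g) (E4 g) x) (PhiF (E1 g) (E2 g) (E3 g) (E4 g) y) =
      PhiF (E1 g) (E2 g) (E3 g) (E4 g) (brc (lamG g) (alG g) (beG g) (gaG g) x y)"
    unfolding lamG_def alG_def beG_def gaG_def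
    apply (rule brk_generic[where va = "g (Zb 1) (E2 g)" and vb = "g (Zb 1) (E3 g)" and vc = "g (Zb 1) (E4 g)"
       and nb = "nrm g (Zb 2)"])
    apply (simp_all add: nrm_pos W_ne Zb_ne)
    apply (simp add: E2_def unt_def)
    apply (simp add: E3_def unt_def W3_def)
    apply (simp add: E4_def unt_def W4_def)
    apply (simp add: E1_def unt_def W1_def)
    done
qed


lemma tri: assumes "is_derivation D"
  shows "g (D *v E2 g) (E3 g) = 0" "g (D *v E2 g) (E4 g) = 0" "g (D *v E3 g) (E4 g) = 0"
proof -
  have h12: "D *v lie_br (Zb 1) (Zb 2) = lie_br (D *v Zb 1) (Zb 2) + lie_br (Zb 1) (D *v Zb 2)"
    using assms by (simp add: is_derivation_def)
  have h13: "D *v lie_br (Zb 1) (Zb 3) = lie_br (D *v Zb 1) (Zb 3) + lie_br (Zb 1) (D *v Zb 3)"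
    using assms by (simp add: is_derivation_def)
  have c12: "(D *v lie_br (Zb 1) (Zb 2)) $ k = (lie_br (D *v Zb 1) (Zb 2) + lie_br (Zb 1) (D *v Zb 2)) $ k" for k
    using h12 by simp
  have c13: "(D *v lie_br (Zb 1) (Zb 3)) $ k = (lie_br (D *v Zb 1) (Zb 3) + lie_br (Zb 1) (D *v Zb 3)) $ k" for k
    using h13 by simp
  note ss = matrix_vector_mult_def sum_4 lie_br_def Zb_def axis_def
  have a1: "D$1$2 = 0" using c12[of 1] by (simp add: ss)
  have a3: "D$3$2 = 0" using c12[of 3] by (simp add: ss)
  have a4: "D$4$2 = 0" using c12[of 4] by (simp add: ss)
  have b1: "D$1$3 = 0" using c13[of 1] by (simp add: ss)
  have b2: "D$2$3 = 0" using c13[of 2] by (simp add: ss)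
  have b4: "D$4$3 = 0" using c13[of 4] by (simp add: ss)
  have DZ2: "D *v Zb 2 = D$2$2 *s Zb 2"
    by (simp add: vec_eq_iff forall_4 matrix_vector_mult_def sum_4 Zb_def axis_def a1 a3 a4)
  have DZ3: "D *v Zb 3 = D$3$3 *s Zb 3"
    by (simp add: vec_eq_iff forall_4 matrix_vector_mult_def sum_4 Zb_def axis_def b1 b2 b4)
  have DE2: "D *v E2 g = D$2$2 *s E2 g"
    by (simp add: E2_def unt_def vector_scalar_commute DZ2 vector_smult_assoc mult.commute)
  have DE3: "D *v E3 g = complex_of_real (1 / nrm g (W3 g)) *s (D$3$3 *s Zb 3 - g (Zb 3) (E2 g) *s (D$2$2 *s E2 g))"
    by (simp add: E3_def unt_def W3_def vector_scalar_commute DZ3 DE2 matrix_vector_mult_diff_distrib)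
  have Z3E4: "g (Zb 3) (E4 g) = 0"
    by (subst Z3e) (simp add: gsimps o34 o24)
  show "g (D *v E2 g) (E3 g) = 0" by (simp add: DE2 gsimps o23)
  show "g (D *v E2 g) (E4 g) = 0" by (simp add: DE2 gsimps o24)
  show "g (D *v E3 g) (E4 g) = 0" by (simp add: DE3 gsimps o24 Z3E4)
qed

lemma orth_iff: "(g (Zb 2) (Zb 3) = 0 \<and> g (Zb 2) (Zb 4) = 0 \<and> g (Zb 3) (Zb 4) = 0) \<longleftrightarrow>
   (alG g = 0 \<and> beG g = 0 \<and> gaG g = 0)"
proof -
  have n1: "nrm g (W1 g) > 0" and n2: "nrm g (Zb 2) > 0" and n3: "nrm g (W3 g) > 0" and n4: "nrm g (W4 g) > 0"
    by (simp_all add: nrm_pos W_ne Zb_ne)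
  define t3 where "t3 = g (Zb 3) (E2 g)"
  define u2 where "u2 = g (Zb 4) (E2 g)"
  define u3 where "u3 = g (Zb 4) (E3 g)"
  have t3e: "t3 = complex_of_real (1 / nrm g (Zb 2)) * cnj (g (Zb 2) (Zb 3))"
    unfolding t3_def E2_def unt_g2 by (metis g_sym)
  have u2e: "u2 = complex_of_real (1 / nrm g (Zb 2)) * cnj (g (Zb 2) (Zb 4))"
    unfolding u2_def E2_def unt_g2 by (metis g_sym)
  have u3e: "u3 = complex_of_real (1 / nrm g (W3 g)) * (cnj (g (Zb 3) (Zb 4)) - cnj t3 * u2)"
    unfolding u3_def E3_def unt_g2 W3_def t3_def u2_def by (simp add: gsimps g_sym[of "Zb 4" "Zb 3"])
  have al: "alG g = - 2 * complex_of_real (1 / nrm g (W1 g)) * t3 / complex_of_real (nrm g (W3 g))"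
    by (simp add: alG_def t3_def)
  have be: "beG g = complex_of_real (1 / nrm g (W1 g)) * (- u2 + 2 * u3 * t3
     / complex_of_real (nrm g (W3 g))) / complex_of_real (nrm g (W4 g))"
    by (simp add: beG_def t3_def u2_def u3_def)
  have ga: "gaG g = complex_of_real (1 / nrm g (W1 g)) * u3 / complex_of_real (nrm g (W4 g))"
    by (simp add: gaG_def u3_def)
  show ?thesis
  proof
    assume h: "g (Zb 2) (Zb 3) = 0 \<and> g (Zb 2) (Zb 4) = 0 \<and> g (Zb 3) (Zb 4) = 0"
    then have "t3 = 0" "u2 = 0" by (simp_all add: t3e u2e)
    moreover then have "u3 = 0" using h by (simp add: u3e)
    ultimately show "alG g = 0 \<and> beG g = 0 \<and> gaG g = 0" by (simp add: al be ga)
  next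
    assume h: "alG g = 0 \<and> beG g = 0 \<and> gaG g = 0"
    have "t3 = 0" using h n1 n3 by (simp add: al)
    moreover have "u3 = 0" using h n1 n4 by (simp add: ga)
    moreover have "u2 = 0" using h n1 n4 \<open>u3 = 0\<close> by (simp add: be)
    ultimately show "g (Zb 2) (Zb 3) = 0 \<and> g (Zb 2) (Zb 4) = 0 \<and> g (Zb 3) (Zb 4) = 0"
      using n2 n3 by (simp add: t3e u2e u3e)
  qed
qed

end

theorem proposition4p1:
  fixes g :: "alg \<Rightarrow> alg \<Rightarrow> complex"
  assumes "herm_ip g"
  shows "hcf_expanding_soliton g \<longleftrightarrow>
           (g (Zb 2) (Zb 3) = 0 \<and> g (Zb 2) (Zb 4) = 0 \<and> g (Zb 3) (Zb 4) = 0)"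
proof -
  interpret hermf g by (rule hermf.intro) (rule assms)
  interpret fr: frame g "E1 g" "E2 g" "E3 g" "E4 g" "lamG g" "alG g" "beG g" "gaG g"
    by (rule frame_inst)
  have lampos: "lamG g > 0" by (simp add: lamG_def nrm_pos W_ne)
  have coE: "fr.co (E2 g) = CV 0 1 0 0" "fr.co (E3 g) = CV 0 0 1 0" "fr.co (E4 g) = CV 0 0 0 1"
    by (simp_all add: fr.co_def fr.on fr.on2)
  show ?thesis
  proof
    assume "hcf_expanding_soliton g"
    then obtain c D Dt where D: "is_derivation D" and Dt: "is_derivation Dt"
      and adj: "\<And>X Y. g (D *v X) Y = g X (Dt *v Y)"
      and K: "\<And>X Y. Khcf g X Y = g (complex_of_real c *s X + (1/2 :: complex) *s (D *v X + Dt *v X)) Y"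
      unfolding hcf_expanding_soliton_def by blast
    note tD = tri[OF D] and tDt = tri[OF Dt]
    have Kz: "Khcf g a b = 0" if ab: "g a b = 0" "g (D *v b) a = 0" "g (Dt *v b) a = 0" for a b
    proof -
      have 1: "g (D *v a) b = 0" using adj[of a b] ab(3) g_sym[of a "Dt *v b"] by simp
      have 2: "g (Dt *v a) b = 0" using adj[of b a] ab(2) g_sym[of "Dt *v a" b] by simp
      show ?thesis by (simp add: K gsimps ab(1) 1 2)
    qed
    have k32: "Khcf g (E3 g) (E2 g) = 0" by (rule Kz) (simp_all add: o32 tD tDt)
    have k42: "Khcf g (E4 g) (E2 g) = 0" by (rule Kz) (simp_all add: o42 tD tDt)
    have k43: "Khcf g (E4 g) (E3 g) = 0" by (rule Kz) (simp_all add: o43 tD tDt)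
    have "- complex_of_real (lamG g) * beG g = 0" using k42 by (simp add: fr.Khcf_co coE K42)
    then have be0: "beG g = 0" using lampos by simp
    have "complex_of_real (lamG g) * gaG g - cnj (alG g) * beG g = 0" using k43 by (simp add: fr.Khcf_co coE K43)
    then have ga0: "gaG g = 0" using lampos be0 by simp
    have "- 2 * complex_of_real (lamG g) * alG g + beG g * cnj (gaG g) = 0" using k32 by (simp add: fr.Khcf_co coE K32)
    then have al0: "alG g = 0" using lampos be0 by simp
    show "g (Zb 2) (Zb 3) = 0 \<and> g (Zb 2) (Zb 4) = 0 \<and> g (Zb 3) (Zb 4) = 0"
      using orth_iff al0 be0 ga0 by simp
  next
    assume "g (Zb 2) (Zb 3) = 0 \<and> g (Zb 2) (Zb 4) = 0 \<and> g (Zb 3) (Zb 4) = 0"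
    then have z: "alG g = 0" "beG g = 0" "gaG g = 0" using orth_iff by simp_all
    define l where "l = lamG g"
    define k where "k = 2 * l^2"
    define Dm :: "complex^4^4" where
      "Dm = (\<chi> i j. complex_of_real k * ((if i = j then 1 else 0) - E1 g $ i * g (Zb j) (E1 g)))"
    have Dm_app: "Dm *v X = complex_of_real k *s (X - g X (E1 g) *s E1 g)" for X
    proof -
      have "g X (E1 g) = g (X$1 *s Zb 1 + X$2 *s Zb 2 + X$3 *s Zb 3 + X$4 *s Zb 4) (E1 g)"
        by (simp only: Xdec[of X, symmetric])
      then have gX: "g X (E1 g) = X$1 * g (Zb 1) (E1 g) + X$2 * g (Zb 2) (E1 g) + X$3 * g (Zb 3) (E1 g) + X$4 * g (Zb 4) (E1 g)"
        by (simp add: gsimps)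
      show ?thesis
        by (simp add: Dm_def vec_eq_iff forall_4 matrix_vector_mult_def sum_4 gX algebra_simps)
    qed
    define Pk where "Pk x = vsc (complex_of_real k) (CV 0 (c2 x) (c3 x) (c4 x))" for x
    have DPhi: "Dm *v fr.Phi x = fr.Phi (Pk x)" for x
    proof -
      have "fr.Phi x - c1 x *s E1 g = fr.Phi (CV 0 (c2 x) (c3 x) (c4 x))"
        by (cases x) simp
      then show ?thesis by (simp add: Dm_app fr.g_Phi_e Pk_def fr.Phi_sc)
    qed
    have der: "is_derivation Dm"
      unfolding is_derivation_def
    proof (intro allI)
      fix X Y
      obtain x y where xy: "X = fr.Phi x" "Y = fr.Phi y" using fr.Phi_co by metis
      have "Pk (brc l 0 0 0 x y) = vadd (brc l 0 0 0 (Pk x) y) (brc l 0 0 0 x (Pk y))"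
        by (cases x; cases y) (simp add: Pk_def brc_def algebra_simps)
      then show "Dm *v lie_br X Y = lie_br (Dm *v X) Y + lie_br X (Dm *v Y)"
        unfolding xy DPhi fr.brk z l_def[symmetric] fr.Phi_add[symmetric] by simp
    qed
    have adjD: "g (Dm *v X) Y = g X (Dm *v Y)" for X Y
    proof -
      obtain x y where xy: "X = fr.Phi x" "Y = fr.Phi y" using fr.Phi_co by metis
      have "hs (Pk x) y = hs x (Pk y)"
        by (cases x; cases y) (simp add: Pk_def algebra_simps)
      then show ?thesis unfolding xy DPhi fr.g_Phi .
    qed
    have Keq: "Khcf g X Y = g (complex_of_real (- k) *s X + (1/2 :: complex) *s (Dm *v X + Dm *v X)) Y" for X Y
    proof -
      obtain x y where xy: "X = fr.Phi x" "Y = fr.Phi y" using fr.Phi_co by metis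
      have "Kc l 0 0 0 x y = hs (vadd (vsc (complex_of_real (- k)) x) (vsc (1/2) (vadd (Pk x) (Pk x)))) y"
        by (cases x; cases y) (simp add: Kdiag Pk_def k_def algebra_simps)
      then show ?thesis
        unfolding xy fr.Khcf_co fr.co_Phi z l_def[symmetric] DPhi fr.Phi_sc[symmetric] fr.Phi_add[symmetric] fr.g_Phi .
    qed
    have "- k < 0" using lampos by (simp add: k_def l_def)
    then show "hcf_expanding_soliton g"
      unfolding hcf_expanding_soliton_def using der adjD Keq by blast
  qed
qed


end
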